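(* Let $Y_k=(y_{1k},\dots,y_{sk})'\in\mathbb{R}^s_{\ge 0}$, $k\in E$, for a finite nonempty set $E$, and let $\mathrm{DMU}_j$ have outputs $y_{1j},\dots,y_{sj}>0$. Fix $r$, let $Q>0$, $\omega\in[0,1]$, and let $$p_{rj}(s)=\begin{cases} Q\omega, & s\le 0,\\ Q\omega\left(1-\frac{s}{y_{rj}}\right), & 0\le s\le y_{rj},\\ 0, & s\ge y_{rj}.\end{cases}$$ Set $M_1=y_{rj}$ and $M_2=\max_{k\in E}\{y_{rk}\}$. Then for every $\lambda_{kj}\ge 0$ ($k\in E$) and $s_{rj}\in\mathbb{R}$ with $\sum_{k\in E}\lambda_{kj}y_{rk}=y_{rj}+s_{rj}$ and $\sum_{k\in E}\lambda_{kj}=1$, there exist binary $I^1_{rj},I^2_{rj},I^3_{rj}\in\{0,1\}$ with $I^1_{rj}+I^2_{rj}+I^3_{rj}=1$ satisfying $$y_{rj}I^3_{rj}-M_1I^1_{rj}\le s_{rj}\le y_{rj}I^2_{rj}+M_2I^3_{rj},$$ and for every such choice of binaries, $p_{rj}(s_{rj})=Q\omega I^1_{rj}+Q\omega\left(1-\frac{s_{rj}}{y_{rj}}\right)I^2_{rj}$. That is, these values of $M_1$ and $M_2$ suffice in the linear representation of the payment function.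
   Context: $E$ is the set of extreme efficient DMUs of the attainable set generated by the DMUs' output vectors; $s_{rj}$ is the deviation of a target (a convex combination of the $Y_k$, $k\in E$) from the actual value $y_{rj}$; $Q$ is the incentive amount available to $\mathrm{DMU}_j$ and $\omega$ the weight of indicator $r$. *)

theory Defs
  imports Complex_Main
begin

definition payment :: "real \<Rightarrow> real \<Rightarrow> real \<Rightarrow> real \<Rightarrow> real" where
  "payment Q w yrj s =
     (if s \<le> 0 then Q * w
      else if s \<le> yrj then Q * w * (1 - s / yrj)
      else 0)"

end

theory Submission
  imports Defs
begin

theorem corollary1:
  fixes E :: "'k set" and Y :: "'k \<Rightarrow> nat \<Rightarrow> real" and yj :: "nat \<Rightarrow> real"
    and s :: nat and r :: nat and Q \<omega> :: real
  assumes "finite E" and "E \<noteq> {}"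
    and "\<forall>k\<in>E. \<forall>i\<in>{1..s}. Y k i \<ge> 0"
    and "\<forall>i\<in>{1..s}. yj i > 0"
    and "r \<in> {1..s}"
    and "Q > 0" and "0 \<le> \<omega>" and "\<omega> \<le> 1"
  defines "M1 \<equiv> yj r"
    and "M2 \<equiv> Max ((\<lambda>k. Y k r) ` E)"
  shows "\<forall>(lam :: 'k \<Rightarrow> real) (srj :: real).
           (\<forall>k\<in>E. lam k \<ge> 0) \<and> (\<Sum>k\<in>E. lam k * Y k r) = yj r + srj
           \<and> (\<Sum>k\<in>E. lam k) = 1 \<longrightarrow>
           (\<exists>I1 I2 I3 :: real. I1 \<in> {0,1} \<and> I2 \<in> {0,1} \<and> I3 \<in> {0,1}
               \<and> I1 + I2 + I3 = 1
               \<and> yj r * I3 - M1 * I1 \<le> srj \<and> srj \<le> yj r * I2 + M2 * I3)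
         \<and> (\<forall>I1 I2 I3 :: real. I1 \<in> {0,1} \<and> I2 \<in> {0,1} \<and> I3 \<in> {0,1}
               \<and> I1 + I2 + I3 = 1
               \<and> yj r * I3 - M1 * I1 \<le> srj \<and> srj \<le> yj r * I2 + M2 * I3
             \<longrightarrow> payment Q \<omega> (yj r) srj
                 = Q * \<omega> * I1 + Q * \<omega> * (1 - srj / yj r) * I2)"
proof (intro allI impI)
  fix lam :: "'k \<Rightarrow> real" and srj :: real
  assume h: "(\<forall>k\<in>E. lam k \<ge> 0) \<and> (\<Sum>k\<in>E. lam k * Y k r) = yj r + srj
           \<and> (\<Sum>k\<in>E. lam k) = 1"
  have y: "yj r > 0" using assms(4,5) by blast
  have Yn: "\<forall>k\<in>E. Y k r \<ge> 0" using assms(3,5) by blast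
  have lo: "(\<Sum>k\<in>E. lam k * Y k r) \<ge> 0"
    using h Yn by (intro sum_nonneg) auto
  have "(\<Sum>k\<in>E. lam k * Y k r) \<le> (\<Sum>k\<in>E. lam k * M2)"
  proof (rule sum_mono)
    fix k assume k: "k \<in> E"
    have "Y k r \<le> M2" unfolding M2_def using k assms(1) by (intro Max_ge) auto
    then show "lam k * Y k r \<le> lam k * M2" using h k by (intro mult_left_mono) auto
  qed
  also have "\<dots> = M2" using h by (simp add: sum_distrib_right[symmetric])
  finally have hi: "srj \<le> M2 - yj r" using h by linarith
  have lo2: "srj \<ge> - yj r" using lo h by linarith
  show "(\<exists>I1 I2 I3 :: real. I1 \<in> {0,1} \<and> I2 \<in> {0,1} \<and> I3 \<in> {0,1}
               \<and> I1 + I2 + I3 = 1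
               \<and> yj r * I3 - M1 * I1 \<le> srj \<and> srj \<le> yj r * I2 + M2 * I3)
         \<and> (\<forall>I1 I2 I3 :: real. I1 \<in> {0,1} \<and> I2 \<in> {0,1} \<and> I3 \<in> {0,1}
               \<and> I1 + I2 + I3 = 1
               \<and> yj r * I3 - M1 * I1 \<le> srj \<and> srj \<le> yj r * I2 + M2 * I3
             \<longrightarrow> payment Q \<omega> (yj r) srj
                 = Q * \<omega> * I1 + Q * \<omega> * (1 - srj / yj r) * I2)"
  proof
    show "\<exists>I1 I2 I3 :: real. I1 \<in> {0,1} \<and> I2 \<in> {0,1} \<and> I3 \<in> {0,1}
               \<and> I1 + I2 + I3 = 1
               \<and> yj r * I3 - M1 * I1 \<le> srj \<and> srj \<le> yj r * I2 + M2 * I3"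
    proof (cases "srj \<le> 0")
      case True
      then show ?thesis using lo2 unfolding M1_def by (intro exI[of _ 1] exI[of _ 0]) auto
    next
      case False
      show ?thesis
      proof (cases "srj \<le> yj r")
        case True
        then show ?thesis using False by (intro exI[of _ 0] exI[of _ 1]) auto
      next
        case F2: False
        then show ?thesis using False hi y
          by (intro exI[of _ 0] exI[of _ 0] exI[of _ 1]) auto
      qed
    qed
  next
    show "\<forall>I1 I2 I3 :: real. I1 \<in> {0,1} \<and> I2 \<in> {0,1} \<and> I3 \<in> {0,1}
               \<and> I1 + I2 + I3 = 1
               \<and> yj r * I3 - M1 * I1 \<le> srj \<and> srj \<le> yj r * I2 + M2 * I3
             \<longrightarrow> payment Q \<omega> (yj r) srj
                 = Q * \<omega> * I1 + Q * \<omega> * (1 - srj / yj r) * I2"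
    proof (intro allI impI)
      fix I1 I2 I3 :: real
      assume a: "I1 \<in> {0,1} \<and> I2 \<in> {0,1} \<and> I3 \<in> {0,1}
               \<and> I1 + I2 + I3 = 1
               \<and> yj r * I3 - M1 * I1 \<le> srj \<and> srj \<le> yj r * I2 + M2 * I3"
      then consider "I1 = 1" "I2 = 0" "I3 = 0" | "I1 = 0" "I2 = 1" "I3 = 0"
        | "I1 = 0" "I2 = 0" "I3 = 1" by auto
      then show "payment Q \<omega> (yj r) srj
                 = Q * \<omega> * I1 + Q * \<omega> * (1 - srj / yj r) * I2"
      proof cases
        case 1 then show ?thesis using a unfolding payment_def M1_def by auto
      next
        case 2
        then have "0 \<le> srj" "srj \<le> yj r" using a by auto
        then show ?thesis using 2 y unfolding payment_def by auto
      next
        case 3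
        then have "yj r \<le> srj" using a by auto
        then show ?thesis using 3 y unfolding payment_def by auto
      qed
    qed
  qed
qed

end
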